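(* Let $L=\{\ell_1,\dots,\ell_n\}$, $R=\{r_1,\dots,r_d\}$ and let $G$ be a spanning tree of the complete bipartite graph on $L\sqcup R$ with right degree vector $v=(v_1,\dots,v_d)$. For each $r_k\in R$ there is a unique maximal tope with right degree vector $v-\mathbf{1}_{[d]\setminus\{k\}}$ contained in $G$.
   Context: Graphs are identified with edge sets; the right degree vector is $(\deg r_1,\dots,\deg r_d)$. $\mathbf{1}_{A}$ denotes the 0/1 indicator vector of $A\subseteq[d]$, so $v-\mathbf{1}_{[d]\setminus\{k\}}$ subtracts $1$ from every coordinate except the $k$-th. Here a maximal tope with right degree vector $w$ is a bipartite graph on $L\sqcup R$ in which every node of $L$ has degree exactly $1$ and $r_i$ has degree $w_i$ for each $i$. *)

theory Defs
  imports Main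
begin

(* Bipartite graphs on L = {l_0,...,l_(n-1)} and R = {r_0,...,r_(d-1)} are identified
   with their edge sets: a pair (i,j) stands for the edge {l_i, r_j}.
   Vertices are encoded as Inl i (for l_i) and Inr j (for r_j). *)

definition bip_vertices :: "nat \<Rightarrow> nat \<Rightarrow> (nat + nat) set" where
  "bip_vertices n d = Inl ` {..<n} \<union> Inr ` {..<d}"

definition bip_adj :: "(nat \<times> nat) set \<Rightarrow> ((nat + nat) \<times> (nat + nat)) set" where
  "bip_adj G = {(Inl i, Inr j) | i j. (i, j) \<in> G} \<union> {(Inr j, Inl i) | i j. (i, j) \<in> G}"

definition bip_graph :: "nat \<Rightarrow> nat \<Rightarrow> (nat \<times> nat) set \<Rightarrow> bool" where
  "bip_graph n d G \<longleftrightarrow> G \<subseteq> {..<n} \<times> {..<d}"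

definition bip_connected :: "nat \<Rightarrow> nat \<Rightarrow> (nat \<times> nat) set \<Rightarrow> bool" where
  "bip_connected n d G \<longleftrightarrow>
     (\<forall>x\<in>bip_vertices n d. \<forall>y\<in>bip_vertices n d. (x, y) \<in> (bip_adj G)\<^sup>*)"

definition bip_acyclic :: "(nat \<times> nat) set \<Rightarrow> bool" where
  "bip_acyclic G \<longleftrightarrow>
     (\<forall>(i, j)\<in>G. (Inl i, Inr j) \<notin> (bip_adj (G - {(i, j)}))\<^sup>*)"

definition bip_spanning_tree :: "nat \<Rightarrow> nat \<Rightarrow> (nat \<times> nat) set \<Rightarrow> bool" where
  "bip_spanning_tree n d G \<longleftrightarrow> bip_graph n d G \<and> bip_connected n d G \<and> bip_acyclic G"

definition left_deg :: "(nat \<times> nat) set \<Rightarrow> nat \<Rightarrow> nat" where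
  "left_deg G i = card {j. (i, j) \<in> G}"

definition right_deg :: "(nat \<times> nat) set \<Rightarrow> nat \<Rightarrow> nat" where
  "right_deg G j = card {i. (i, j) \<in> G}"

definition maximal_tope :: "nat \<Rightarrow> nat \<Rightarrow> (nat \<Rightarrow> nat) \<Rightarrow> (nat \<times> nat) set \<Rightarrow> bool" where
  "maximal_tope n d w T \<longleftrightarrow> bip_graph n d T \<and>
     (\<forall>i<n. left_deg T i = 1) \<and> (\<forall>j<d. right_deg T j = w j)"

end

theory Submission
  imports Defs
begin

lemma adj_sym: "(x,y) \<in> bip_adj H \<Longrightarrow> (y,x) \<in> bip_adj H"
  unfolding bip_adj_def by auto

lemma rt_sym: "(x,y) \<in> (bip_adj H)\<^sup>* \<Longrightarrow> (y,x) \<in> (bip_adj H)\<^sup>*"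
proof (induction rule: rtrancl_induct)
  case base then show ?case by simp
next
  case (step y z)
  have "(z,y) \<in> (bip_adj H)\<^sup>*" using adj_sym[OF step(2)] by blast
  then show ?case using step(3) by (meson rtrancl_trans)
qed

lemma adj_mono: "H \<subseteq> H' \<Longrightarrow> bip_adj H \<subseteq> bip_adj H'"
  unfolding bip_adj_def by auto

lemma rt_mono: "H \<subseteq> H' \<Longrightarrow> (x,y) \<in> (bip_adj H)\<^sup>* \<Longrightarrow> (x,y) \<in> (bip_adj H')\<^sup>*"
  using rtrancl_mono[OF adj_mono] by blast

lemma edge_LR: "(i,j) \<in> H \<Longrightarrow> (Inl i, Inr j) \<in> bip_adj H"
  unfolding bip_adj_def by auto
lemma edge_RL: "(i,j) \<in> H \<Longrightarrow> (Inr j, Inl i) \<in> bip_adj H"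
  unfolding bip_adj_def by auto

lemma adj_remove:
  "(u,v) \<in> bip_adj H \<Longrightarrow> (u,v) \<noteq> (Inl i, Inr j) \<Longrightarrow> (u,v) \<noteq> (Inr j, Inl i)
   \<Longrightarrow> (u,v) \<in> bip_adj (H - {(i,j)})"
  unfolding bip_adj_def by auto

lemma removal:
  assumes "(x,y) \<in> (bip_adj H)\<^sup>*"
  shows "(x,y) \<in> (bip_adj (H - {(i,j)}))\<^sup>* \<or>
    ((x, Inl i) \<in> (bip_adj (H - {(i,j)}))\<^sup>* \<and> (Inr j, y) \<in> (bip_adj (H - {(i,j)}))\<^sup>*) \<or>
    ((x, Inr j) \<in> (bip_adj (H - {(i,j)}))\<^sup>* \<and> (Inl i, y) \<in> (bip_adj (H - {(i,j)}))\<^sup>*)"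
  using assms
proof (induction rule: rtrancl_induct)
  case base then show ?case by simp
next
  case (step z y)
  let ?R = "bip_adj (H - {(i,j)})"
  show ?case
  proof (cases "(z,y) = (Inl i, Inr j) \<or> (z,y) = (Inr j, Inl i)")
    case True
    then show ?thesis
    proof (elim disjE)
      assume zy: "(z,y) = (Inl i, Inr j)"
      then have z: "z = Inl i" and y: "y = Inr j" by simp_all
      from step(3)[unfolded z] show ?thesis
      proof (elim disjE conjE)
        assume a: "(x, Inl i) \<in> ?R\<^sup>*"
        show ?thesis unfolding y by (rule disjI2, rule disjI1, rule conjI, rule a, rule rtrancl.rtrancl_refl)
      next
        assume a: "(x, Inl i) \<in> ?R\<^sup>*" and "(Inr j, Inl i) \<in> ?R\<^sup>*"
        show ?thesis unfolding y by (rule disjI2, rule disjI1, rule conjI, rule a, rule rtrancl.rtrancl_refl)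
      next
        assume a: "(x, Inr j) \<in> ?R\<^sup>*" and "(Inl i, Inl i) \<in> ?R\<^sup>*"
        show ?thesis unfolding y by (rule disjI1, rule a)
      qed
    next
      assume zy: "(z,y) = (Inr j, Inl i)"
      then have z: "z = Inr j" and y: "y = Inl i" by simp_all
      from step(3)[unfolded z] show ?thesis
      proof (elim disjE conjE)
        assume a: "(x, Inr j) \<in> ?R\<^sup>*"
        show ?thesis unfolding y by (rule disjI2, rule disjI2, rule conjI, rule a, rule rtrancl.rtrancl_refl)
      next
        assume a: "(x, Inl i) \<in> ?R\<^sup>*" and "(Inr j, Inr j) \<in> ?R\<^sup>*"
        show ?thesis unfolding y by (rule disjI1, rule a)
      next
        assume a: "(x, Inr j) \<in> ?R\<^sup>*" and "(Inl i, Inr j) \<in> ?R\<^sup>*"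
        show ?thesis unfolding y by (rule disjI2, rule disjI2, rule conjI, rule a, rule rtrancl.rtrancl_refl)
      qed
    qed
  next
    case False
    then have zy: "(z,y) \<in> ?R" by (intro adj_remove[OF step(2)]) simp_all
    from step(3) show ?thesis
    proof (elim disjE conjE)
      assume a: "(x, z) \<in> ?R\<^sup>*"
      show ?thesis by (rule disjI1, rule rtrancl.rtrancl_into_rtrancl[OF a zy])
    next
      assume a: "(x, Inl i) \<in> ?R\<^sup>*" and b: "(Inr j, z) \<in> ?R\<^sup>*"
      show ?thesis by (rule disjI2, rule disjI1, rule conjI, rule a, rule rtrancl.rtrancl_into_rtrancl[OF b zy])
    next
      assume a: "(x, Inr j) \<in> ?R\<^sup>*" and b: "(Inl i, z) \<in> ?R\<^sup>*"
      show ?thesis by (rule disjI2, rule disjI2, rule conjI, rule a, rule rtrancl.rtrancl_into_rtrancl[OF b zy])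
    qed
  qed
qed

lemma first_edge:
  assumes "(x,y) \<in> (bip_adj G)\<^sup>*" "x \<noteq> y"
  shows "\<exists>i j. (i,j) \<in> G \<and> ((x = Inl i \<and> (Inr j, y) \<in> (bip_adj (G - {(i,j)}))\<^sup>*) \<or>
      (x = Inr j \<and> (Inl i, y) \<in> (bip_adj (G - {(i,j)}))\<^sup>*))"
  using assms
proof (induction rule: rtrancl_induct)
  case base then show ?case by simp
next
  case (step z y)
  show ?case
  proof (cases "z = x")
    case True
    with step(2) show ?thesis unfolding bip_adj_def by auto
  next
    case False
    then obtain i j where ij: "(i,j) \<in> G" and
      disj: "(x = Inl i \<and> (Inr j, z) \<in> (bip_adj (G - {(i,j)}))\<^sup>*) \<or>
      (x = Inr j \<and> (Inl i, z) \<in> (bip_adj (G - {(i,j)}))\<^sup>*)" using step(3) by blast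
    have "(z,y) \<in> bip_adj (G - {(i,j)})"
      apply (rule adj_remove[OF step(2)]) using disj False step(4) by auto
    then have "(x = Inl i \<and> (Inr j, y) \<in> (bip_adj (G - {(i,j)}))\<^sup>*) \<or>
      (x = Inr j \<and> (Inl i, y) \<in> (bip_adj (G - {(i,j)}))\<^sup>*)"
      using disj by (meson rtrancl.rtrancl_into_rtrancl)
    then show ?thesis using ij by (intro exI[of _ i] exI[of _ j]) simp
  qed
qed

definition T0 :: "nat \<Rightarrow> (nat \<times> nat) set \<Rightarrow> (nat \<times> nat) set" where
  "T0 k G = {(i,j). (i,j) \<in> G \<and> (Inr j, Inr k) \<in> (bip_adj (G - {(i,j)}))\<^sup>*}"

context
  fixes n d k :: nat and G :: "(nat \<times> nat) set"
  assumes st: "bip_spanning_tree n d G" and kd: "k < d"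
begin

lemma Gsub: "G \<subseteq> {..<n} \<times> {..<d}"
  using st unfolding bip_spanning_tree_def bip_graph_def by blast

lemma conn: "x \<in> bip_vertices n d \<Longrightarrow> y \<in> bip_vertices n d \<Longrightarrow> (x,y) \<in> (bip_adj G)\<^sup>*"
  using st unfolding bip_spanning_tree_def bip_connected_def by blast

lemma acyc: "(i,j) \<in> G \<Longrightarrow> (Inl i, Inr j) \<notin> (bip_adj (G - {(i,j)}))\<^sup>*"
  using st unfolding bip_spanning_tree_def bip_acyclic_def by fastforce

lemma acyc': "(i,j) \<in> G \<Longrightarrow> (Inr j, Inl i) \<notin> (bip_adj (G - {(i,j)}))\<^sup>*"
  using acyc rt_sym by blast

lemma finG: "finite G" by (rule finite_subset[OF Gsub]) simp

lemma T0_atmost: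
  assumes a: "(i,j) \<in> T0 k G" "(i,j') \<in> T0 k G"
  shows "j = j'"
proof (rule ccontr)
  assume ne: "j \<noteq> j'"
  have e: "(i,j) \<in> G" and p: "(Inr j, Inr k) \<in> (bip_adj (G - {(i,j)}))\<^sup>*"
    using a unfolding T0_def by auto
  have e': "(i,j') \<in> G" and p': "(Inr j', Inr k) \<in> (bip_adj (G - {(i,j')}))\<^sup>*"
    using a unfolding T0_def by auto
  have G1: "G - {(i,j)} - {(i,j')} \<subseteq> G - {(i,j)}" and G2: "G - {(i,j)} - {(i,j')} \<subseteq> G - {(i,j')}"
    by auto
  from removal[OF p, of i j'] show False
  proof (elim disjE conjE)
    assume h: "(Inr j, Inr k) \<in> (bip_adj (G - {(i, j)} - {(i, j')}))\<^sup>*"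
    have "(Inl i, Inr j) \<in> bip_adj (G - {(i,j')})" using e ne by (intro edge_LR) auto
    moreover have "(Inr j, Inr k) \<in> (bip_adj (G - {(i,j')}))\<^sup>*" using rt_mono[OF G2 h] .
    moreover have "(Inr k, Inr j') \<in> (bip_adj (G - {(i,j')}))\<^sup>*" using rt_sym[OF p'] .
    ultimately have "(Inl i, Inr j') \<in> (bip_adj (G - {(i,j')}))\<^sup>*"
      by (meson converse_rtrancl_into_rtrancl rtrancl_trans)
    then show False using acyc[OF e'] by blast
  next
    assume h: "(Inr j, Inl i) \<in> (bip_adj (G - {(i, j)} - {(i, j')}))\<^sup>*"
    show False using rt_mono[OF G1 h] acyc'[OF e] by blast
  next
    assume h: "(Inl i, Inr k) \<in> (bip_adj (G - {(i, j)} - {(i, j')}))\<^sup>*"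
    have "(Inl i, Inr j) \<in> (bip_adj (G - {(i,j)}))\<^sup>*"
      using rt_mono[OF G1 h] rt_sym[OF p] by (meson rtrancl_trans)
    then show False using acyc[OF e] by blast
  qed
qed

lemma T0_left: assumes "i < n" shows "\<exists>j. (i,j) \<in> T0 k G"
proof -
  have "(Inl i, Inr k) \<in> (bip_adj G)\<^sup>*"
    using conn assms kd unfolding bip_vertices_def by auto
  from first_edge[OF this] obtain i' j where "(i',j) \<in> G"
    "(Inl i = Inl i' \<and> (Inr j, Inr k) \<in> (bip_adj (G - {(i',j)}))\<^sup>*) \<or>
      (Inl i = Inr j \<and> (Inl i', Inr k) \<in> (bip_adj (G - {(i',j)}))\<^sup>*)" by auto
  then show ?thesis unfolding T0_def by auto
qed

lemma T0_right_k: "{i. (i,k) \<in> T0 k G} = {i. (i,k) \<in> G}"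
  unfolding T0_def by auto

lemma T0_right_j:
  assumes jd: "j < d" and jk: "j \<noteq> k"
  shows "\<exists>i1. (i1,j) \<in> G \<and> {i. (i,j) \<in> T0 k G} = {i. (i,j) \<in> G} - {i1}"
proof -
  have "(Inr j, Inr k) \<in> (bip_adj G)\<^sup>*"
    using conn jd kd unfolding bip_vertices_def by auto
  from first_edge[OF this] jk obtain i1 where e1: "(i1,j) \<in> G" and
    q: "(Inl i1, Inr k) \<in> (bip_adj (G - {(i1,j)}))\<^sup>*" by auto
  have "{i. (i,j) \<in> T0 k G} = {i. (i,j) \<in> G} - {i1}"
  proof (intro equalityI subsetI)
    fix i assume "i \<in> {i. (i,j) \<in> T0 k G}"
    then have g: "(i,j) \<in> G" and p: "(Inr j, Inr k) \<in> (bip_adj (G - {(i,j)}))\<^sup>*"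
      unfolding T0_def by auto
    have "i \<noteq> i1"
    proof
      assume "i = i1"
      then have "(Inl i1, Inr j) \<in> (bip_adj (G - {(i1,j)}))\<^sup>*"
        using q rt_sym[OF p] by (meson rtrancl_trans)
      then show False using acyc[OF e1] by blast
    qed
    then show "i \<in> {i. (i,j) \<in> G} - {i1}" using g by auto
  next
    fix i assume "i \<in> {i. (i,j) \<in> G} - {i1}"
    then have g: "(i,j) \<in> G" and ne: "i \<noteq> i1" by auto
    have G1: "G - {(i1,j)} - {(i,j)} \<subseteq> G - {(i,j)}" and G2: "G - {(i1,j)} - {(i,j)} \<subseteq> G - {(i1,j)}"
      by auto
    have ed: "(Inr j, Inl i1) \<in> bip_adj (G - {(i,j)})" using e1 ne by (intro edge_RL) auto
    have "(Inr j, Inr k) \<in> (bip_adj (G - {(i,j)}))\<^sup>*"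
      using removal[OF q, of i j]
    proof (elim disjE conjE)
      assume h: "(Inl i1, Inr k) \<in> (bip_adj (G - {(i1, j)} - {(i, j)}))\<^sup>*"
      show ?thesis using ed rt_mono[OF G1 h] by (meson converse_rtrancl_into_rtrancl)
    next
      assume h: "(Inr j, Inr k) \<in> (bip_adj (G - {(i1, j)} - {(i, j)}))\<^sup>*"
      show ?thesis using rt_mono[OF G1 h] .
    next
      assume h: "(Inl i1, Inr j) \<in> (bip_adj (G - {(i1, j)} - {(i, j)}))\<^sup>*"
      show ?thesis using rt_mono[OF G2 h] acyc[OF e1] by blast
    qed
    then show "i \<in> {i. (i,j) \<in> T0 k G}" using g unfolding T0_def by auto
  qed
  then show ?thesis using e1 by blast
qed

lemma finite_col: "finite {i. (i,j) \<in> G}"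
proof (rule finite_subset[of _ "{..<n}"])
  show "{i. (i,j) \<in> G} \<subseteq> {..<n}"
  proof
    fix i assume "i \<in> {i. (i,j) \<in> G}"
    then have "(i,j) \<in> {..<n} \<times> {..<d}" using Gsub by (simp add: subset_iff)
    then show "i \<in> {..<n}" by simp
  qed
qed simp

lemma T0_valid: "T0 k G \<subseteq> G \<and>
  maximal_tope n d (\<lambda>j. if j = k then right_deg G j else right_deg G j - 1) (T0 k G)"
proof -
  have sub: "T0 k G \<subseteq> G" unfolding T0_def by auto
  have left: "left_deg (T0 k G) i = 1" if iN: "i < n" for i
  proof -
    obtain j where j: "(i,j) \<in> T0 k G" using T0_left[OF iN] by blast
    have "{j'. (i,j') \<in> T0 k G} = {j}" using j T0_atmost by blast
    then show ?thesis unfolding left_deg_def by simp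
  qed
  have right: "right_deg (T0 k G) j = (if j = k then right_deg G j else right_deg G j - 1)"
    if jD: "j < d" for j
  proof (cases "j = k")
    case True then show ?thesis unfolding right_deg_def using T0_right_k by simp
  next
    case False
    obtain i1 where "(i1,j) \<in> G" "{i. (i,j) \<in> T0 k G} = {i. (i,j) \<in> G} - {i1}"
      using T0_right_j[OF jD False] by blast
    then show ?thesis unfolding right_deg_def using False finite_col[of j]
      by (simp add: card_Diff_singleton)
  qed
  have bg: "T0 k G \<subseteq> {..<n} \<times> {..<d}" using sub Gsub by (rule order_trans)
  have "maximal_tope n d (\<lambda>j. if j = k then right_deg G j else right_deg G j - 1) (T0 k G)"
    unfolding maximal_tope_def bip_graph_def
  proof (intro conjI allI impI)
    show "T0 k G \<subseteq> {..<n} \<times> {..<d}" by (rule bg)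
  next
    fix i assume "i < n" then show "left_deg (T0 k G) i = 1" by (rule left)
  next
    fix j assume "j < d" then show "right_deg (T0 k G) j = (if j = k then right_deg G j else right_deg G j - 1)" by (rule right)
  qed
  then show ?thesis using sub by blast
qed

definition Dset :: "nat \<Rightarrow> nat \<Rightarrow> (nat + nat) set" where
  "Dset i j = {x. (Inr j, x) \<in> (bip_adj (G - {(i,j)}))\<^sup>*}"

lemma reach_in: "(x,y) \<in> (bip_adj H)\<^sup>* \<Longrightarrow> H \<subseteq> G \<Longrightarrow> y = x \<or> y \<in> Inl ` {..<n} \<union> Inr ` {..<d}"
proof (induction rule: rtrancl_induct)
  case base then show ?case by simp
next
  case (step y z)
  then show ?case using Gsub unfolding bip_adj_def by auto
qed

lemma Dset_finite: "finite (Dset i j)"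
proof -
  have "Dset i j \<subseteq> insert (Inr j) (Inl ` {..<n} \<union> Inr ` {..<d})"
    unfolding Dset_def using reach_in by blast
  then show ?thesis by (rule finite_subset) auto
qed

lemma key:
  assumes TG: "T \<subseteq> G"
    and mt: "maximal_tope n d (\<lambda>j. if j = k then right_deg G j else right_deg G j - 1) T"
    and ij: "(i,j) \<in> T"
  shows "(i,j) \<in> T0 k G"
proof -
  have ldeg: "\<And>i. i < n \<Longrightarrow> left_deg T i = 1" and
    rdeg: "\<And>j. j < d \<Longrightarrow> right_deg T j = (if j = k then right_deg G j else right_deg G j - 1)"
    using mt unfolding maximal_tope_def by auto
  have claim: "\<forall>i j. (i,j) \<in> T \<longrightarrow> Dset i j = X \<longrightarrow> Inr k \<in> X" if "finite X" for X
    using that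
  proof (induction X rule: finite_psubset_induct)
    case (psubset X)
    show ?case
    proof (intro allI impI)
      fix i j assume ijT: "(i,j) \<in> T" and DX: "Dset i j = X"
      show "Inr k \<in> X"
      proof (rule ccontr)
        assume nk: "Inr k \<notin> X"
        have "Inr j \<in> X" using DX unfolding Dset_def by auto
        then have jk: "j \<noteq> k" using nk by auto
        have eG: "(i,j) \<in> G" using ijT TG by auto
        then have jd: "j < d" using Gsub by auto
        have rd: "card {i. (i,j) \<in> T} = card {i. (i,j) \<in> G} - 1"
          using rdeg[OF jd] jk unfolding right_deg_def by simp
        have AB: "{i. (i,j) \<in> T} \<subseteq> {i. (i,j) \<in> G}" using TG by auto
        have "{i. (i,j) \<in> T} \<noteq> {i. (i,j) \<in> G}"
        proof
          assume eq: "{i. (i,j) \<in> T} = {i. (i,j) \<in> G}"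
          have "card {i. (i,j) \<in> G} > 0"
            using finite_col[of j] eG by (auto simp: card_gt_0_iff)
          then show False using rd eq by simp
        qed
        then obtain i' where e': "(i',j) \<in> G" and e'T: "(i',j) \<notin> T" using AB by blast
        have i'n: "i' < n" using e' Gsub by auto
        have "card {j. (i',j) \<in> T} = 1" using ldeg[OF i'n] unfolding left_deg_def .
        then obtain j'' where e''T: "(i',j'') \<in> T" by (metis (no_types, lifting) card_1_singletonE insertI1 mem_Collect_eq)
        have e'': "(i',j'') \<in> G" using e''T TG by auto
        have ii': "i \<noteq> i'" using ijT e'T by auto
        have jj'': "j \<noteq> j''" using e'T e''T by auto
        have ed1: "(Inr j, Inl i') \<in> bip_adj (G - {(i,j)})" using e' ii' by (intro edge_RL) auto
        have ed2: "(Inl i', Inr j'') \<in> bip_adj (G - {(i,j)})" using e'' ii' by (intro edge_LR) auto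
        have ed3: "(Inr j, Inl i') \<in> bip_adj (G - {(i',j'')})" using e' jj'' by (intro edge_RL) auto
        have i'X: "Inl i' \<in> X" using ed1 DX unfolding Dset_def by auto
        have i'D: "Inl i' \<notin> Dset i' j''" using acyc'[OF e''] unfolding Dset_def by auto
        have G1: "G - {(i',j'')} - {(i,j)} \<subseteq> G - {(i,j)}" and G2: "G - {(i',j'')} - {(i,j)} \<subseteq> G - {(i',j'')}"
          by auto
        have sub: "Dset i' j'' \<subseteq> X"
        proof
          fix x assume "x \<in> Dset i' j''"
          then have p: "(Inr j'', x) \<in> (bip_adj (G - {(i',j'')}))\<^sup>*" unfolding Dset_def by auto
          have "(Inr j, x) \<in> (bip_adj (G - {(i,j)}))\<^sup>*"
            using removal[OF p, of i j]
          proof (elim disjE conjE)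
            assume h: "(Inr j'', x) \<in> (bip_adj (G - {(i', j'')} - {(i, j)}))\<^sup>*"
            show ?thesis using ed1 ed2 rt_mono[OF G1 h] by (meson converse_rtrancl_into_rtrancl)
          next
            assume h: "(Inr j, x) \<in> (bip_adj (G - {(i', j'')} - {(i, j)}))\<^sup>*"
            show ?thesis using rt_mono[OF G1 h] .
          next
            assume h: "(Inr j'', Inr j) \<in> (bip_adj (G - {(i', j'')} - {(i, j)}))\<^sup>*"
            have "(Inr j'', Inl i') \<in> (bip_adj (G - {(i',j'')}))\<^sup>*"
              using rt_mono[OF G2 h] ed3 by (meson rtrancl.rtrancl_into_rtrancl)
            then show ?thesis using acyc'[OF e''] by blast
          qed
          then show "x \<in> X" using DX unfolding Dset_def by auto
        qed
        have "Dset i' j'' \<subset> X" using sub i'X i'D by blast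
        then have "Inr k \<in> Dset i' j''" using psubset.IH e''T by blast
        then show False using sub nk by blast
      qed
    qed
  qed
  have "Inr k \<in> Dset i j" using claim[OF Dset_finite[of i j]] ij by blast
  then show ?thesis using ij TG unfolding Dset_def T0_def by auto
qed

lemma unique:
  assumes TG: "T \<subseteq> G"
    and mt: "maximal_tope n d (\<lambda>j. if j = k then right_deg G j else right_deg G j - 1) T"
  shows "T = T0 k G"
proof
  show "T \<subseteq> T0 k G" using key[OF TG mt] by auto
next
  show "T0 k G \<subseteq> T"
  proof
    fix p assume pT0: "p \<in> T0 k G"
    obtain i j where pij: "p = (i,j)" by force
    have "i < n" using pT0 pij Gsub unfolding T0_def by auto
    then have "card {j. (i,j) \<in> T} = 1" using mt unfolding maximal_tope_def left_deg_def by auto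
    then obtain j' where j': "(i,j') \<in> T"
      by (metis (no_types, lifting) card_1_singletonE insertI1 mem_Collect_eq)
    have "(i,j') \<in> T0 k G" using key[OF TG mt j'] .
    then have "j' = j" using T0_atmost pT0 pij by blast
    then show "p \<in> T" using j' pij by simp
  qed
qed

end

theorem proposition2p9:
  fixes n d k :: nat and G :: "(nat \<times> nat) set"
  assumes "bip_spanning_tree n d G"
    and "k < d"
  shows "\<exists>!T. T \<subseteq> G \<and>
           maximal_tope n d (\<lambda>j. if j = k then right_deg G j else right_deg G j - 1) T"
proof (rule ex1I[of _ "T0 k G"])
  show "T0 k G \<subseteq> G \<and>
    maximal_tope n d (\<lambda>j. if j = k then right_deg G j else right_deg G j - 1) (T0 k G)"
    using T0_valid[OF assms] .
next
  fix T assume "T \<subseteq> G \<and>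
    maximal_tope n d (\<lambda>j. if j = k then right_deg G j else right_deg G j - 1) T"
  then show "T = T0 k G" using unique[OF assms] by blast
qed

end
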